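(* In the setting below, for $z\in\mathbb{Z}/(n)$ let $A_z=\{((t_1,\dots,t_n),(s_1,\dots,s_n))\in T\rtimes_\circ S : t_{z'}=0 \text{ and } s_{z'}=0 \text{ for all } z'\neq z\}$. Then each $A_z$ is a left ideal of $T\rtimes_\circ S$ whose multiplicative group is abelian, and the additive group of $T\rtimes_\circ S$ is the direct sum of the additive groups of the $A_z$. If $\alpha$ is not trivial, then the multiplicative group of $T\rtimes_\circ S$ is metabelian but not abelian. Moreover, if the $A_z$ are finite and of pairwise relatively prime orders, then all Sylow subgroups of the multiplicative group of $T\rtimes_\circ S$ are abelian.
   Context: A left brace is a set $B$ with two operations $+,\cdot$ such that $(B,+)$ is an abelian group, $(B,\cdot)$ is a group and $a(b+c)+a=ab+ac$ for all $a,b,c$; $\lambda_a(b)=ab-a$. A left ideal is a subgroup $L$ of $(B,+)$ with $\lambda_b(L)\subseteq L$ for all $b\in B$. A left brace is trivial if $ab=a+b$ for all $a,b$. For a symmetric bi-additive map $b\colon T\times T\to S$, $\mathrm{O}(T,b)=\{f\in\mathrm{Aut}(T,+): b(f(x),f(y))=b(x,y)\ \forall x,y\}$. Setting: $n>1$; for each $z\in\mathbb{Z}/(n)$, $T_z,S_z$ are trivial left braces, $b_z\colon T_z\times T_z\to S_z$ is symmetric bilinear, and $f^{(z,z')}\colon S_z\to\mathrm{O}(T_{z'},b_{z'})$ ($z,z'\in\mathbb{Z}/(n)$) are group homomorphisms $s\mapsto f^{(z,z')}_s$ with $f^{(z_1,z)}_{s_1}f^{(z_2,z)}_{s_2}=f^{(z_2,z)}_{s_2}f^{(z_1,z)}_{s_1}$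 and $f^{(z,z)}_s=\mathrm{id}$. $T=\prod_z T_z$, $S=\prod_z S_z$, $b(t,t')=(b_z(t_z,t'_z))_z$, and $\alpha_{(s_1,\dots,s_n)}(t_1,\dots,t_n)=(f^{(1,1)}_{s_1}\cdots f^{(n,1)}_{s_n}(t_1),\dots,f^{(1,n)}_{s_1}\cdots f^{(n,n)}_{s_n}(t_n))$; $\alpha$ is trivial means $\alpha_s=\mathrm{id}$ for all $s$. $T\rtimes_\circ S$ is the set $T\times S$ with $(t_1,s_1)+(t_2,s_2)=(t_1+t_2,s_1+s_2+b(t_1,t_2))$ and $(t_1,s_1)(t_2,s_2)=(t_1+\alpha_{s_1}(t_2),s_1+s_2)$; it is a left brace. *)

theory Defs
  imports "HOL-Algebra.Algebra" "HOL-Computational_Algebra.Primes"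
begin

text \<open>The index set Z/(n) is represented by the residues 0, ..., n-1 (type nat).
  All T_z live inside one ambient abelian group type 't, all S_z inside 's.\<close>

definition ab_subgroup :: "'a::ab_group_add set \<Rightarrow> bool" where
  "ab_subgroup A \<longleftrightarrow> 0 \<in> A \<and> (\<forall>x\<in>A. \<forall>y\<in>A. x + y \<in> A) \<and> (\<forall>x\<in>A. - x \<in> A)"

definition sym_biadditive :: "'t::ab_group_add set \<Rightarrow> 's::ab_group_add set \<Rightarrow> ('t \<Rightarrow> 't \<Rightarrow> 's) \<Rightarrow> bool" where
  "sym_biadditive T S b \<longleftrightarrow>
     (\<forall>x\<in>T. \<forall>y\<in>T. b x y \<in> S \<and> b x y = b y x) \<and>
     (\<forall>x\<in>T. \<forall>x'\<in>T. \<forall>y\<in>T. b (x + x') y = b x y + b x' y)"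

definition orth_group :: "'t::ab_group_add set \<Rightarrow> ('t \<Rightarrow> 't \<Rightarrow> 's) \<Rightarrow> ('t \<Rightarrow> 't) set" where
  "orth_group T b = {g. bij_betw g T T \<and> (\<forall>x\<in>T. \<forall>y\<in>T. g (x + y) = g x + g y)
                        \<and> (\<forall>x\<in>T. \<forall>y\<in>T. b (g x) (g y) = b x y)}"

definition setting ::
  "nat \<Rightarrow> (nat \<Rightarrow> 't::ab_group_add set) \<Rightarrow> (nat \<Rightarrow> 's::ab_group_add set)
   \<Rightarrow> (nat \<Rightarrow> 't \<Rightarrow> 't \<Rightarrow> 's) \<Rightarrow> (nat \<Rightarrow> nat \<Rightarrow> 's \<Rightarrow> 't \<Rightarrow> 't) \<Rightarrow> bool" where
  "setting n TT SS b f \<longleftrightarrow> n > 1 \<and>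
     (\<forall>z<n. ab_subgroup (TT z) \<and> ab_subgroup (SS z) \<and> sym_biadditive (TT z) (SS z) (b z)) \<and>
     (\<forall>z<n. \<forall>z'<n. \<forall>s\<in>SS z. f z z' s \<in> orth_group (TT z') (b z')) \<and>
     (\<forall>z<n. \<forall>z'<n. \<forall>s1\<in>SS z. \<forall>s2\<in>SS z. \<forall>t\<in>TT z'.
         f z z' (s1 + s2) t = f z z' s1 (f z z' s2 t)) \<and>
     (\<forall>z1<n. \<forall>z2<n. \<forall>z<n. \<forall>s1\<in>SS z1. \<forall>s2\<in>SS z2. \<forall>t\<in>TT z.
         f z1 z s1 (f z2 z s2 t) = f z2 z s2 (f z1 z s1 t)) \<and>
     (\<forall>z<n. \<forall>s\<in>SS z. \<forall>t\<in>TT z. f z z s t = t)"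

text \<open>T = prod_z T_z and S = prod_z S_z, as functions extensional outside {0..<n}.\<close>
definition prodT :: "nat \<Rightarrow> (nat \<Rightarrow> 'a::zero set) \<Rightarrow> (nat \<Rightarrow> 'a) set" where
  "prodT n A = {x. (\<forall>z<n. x z \<in> A z) \<and> (\<forall>z\<ge>n. x z = 0)}"

definition alpha :: "nat \<Rightarrow> (nat \<Rightarrow> nat \<Rightarrow> 's \<Rightarrow> 't \<Rightarrow> 't) \<Rightarrow> (nat \<Rightarrow> 's) \<Rightarrow> (nat \<Rightarrow> 't::zero) \<Rightarrow> (nat \<Rightarrow> 't)" where
  "alpha n f s t = (\<lambda>z. if z < n then foldr (\<lambda>z' g. f z' z (s z') \<circ> g) [0..<n] id (t z) else 0)"

definition sdp_carrier :: "nat \<Rightarrow> (nat \<Rightarrow> 't::zero set) \<Rightarrow> (nat \<Rightarrow> 's::zero set) \<Rightarrow> ((nat \<Rightarrow> 't) \<times> (nat \<Rightarrow> 's)) set" where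
  "sdp_carrier n TT SS = prodT n TT \<times> prodT n SS"

definition sdp_add :: "nat \<Rightarrow> (nat \<Rightarrow> 't::ab_group_add \<Rightarrow> 't \<Rightarrow> 's::ab_group_add)
   \<Rightarrow> (nat \<Rightarrow> 't) \<times> (nat \<Rightarrow> 's) \<Rightarrow> (nat \<Rightarrow> 't) \<times> (nat \<Rightarrow> 's) \<Rightarrow> (nat \<Rightarrow> 't) \<times> (nat \<Rightarrow> 's)" where
  "sdp_add n b x y = (\<lambda>z. fst x z + fst y z,
       \<lambda>z. if z < n then snd x z + snd y z + b z (fst x z) (fst y z) else 0)"

definition sdp_mult :: "nat \<Rightarrow> (nat \<Rightarrow> nat \<Rightarrow> 's::ab_group_add \<Rightarrow> 't::ab_group_add \<Rightarrow> 't)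
   \<Rightarrow> (nat \<Rightarrow> 't) \<times> (nat \<Rightarrow> 's) \<Rightarrow> (nat \<Rightarrow> 't) \<times> (nat \<Rightarrow> 's) \<Rightarrow> (nat \<Rightarrow> 't) \<times> (nat \<Rightarrow> 's)" where
  "sdp_mult n f x y = (\<lambda>z. fst x z + alpha n f (snd x) (fst y) z, \<lambda>z. snd x z + snd y z)"

definition sdp_addG :: "nat \<Rightarrow> (nat \<Rightarrow> 't::ab_group_add set) \<Rightarrow> (nat \<Rightarrow> 's::ab_group_add set)
   \<Rightarrow> (nat \<Rightarrow> 't \<Rightarrow> 't \<Rightarrow> 's) \<Rightarrow> ((nat \<Rightarrow> 't) \<times> (nat \<Rightarrow> 's)) monoid" where
  "sdp_addG n TT SS b = \<lparr>carrier = sdp_carrier n TT SS, monoid.mult = sdp_add n b, one = (\<lambda>_. 0, \<lambda>_. 0)\<rparr>"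

definition sdp_multG :: "nat \<Rightarrow> (nat \<Rightarrow> 't::ab_group_add set) \<Rightarrow> (nat \<Rightarrow> 's::ab_group_add set)
   \<Rightarrow> (nat \<Rightarrow> nat \<Rightarrow> 's \<Rightarrow> 't \<Rightarrow> 't) \<Rightarrow> ((nat \<Rightarrow> 't) \<times> (nat \<Rightarrow> 's)) monoid" where
  "sdp_multG n TT SS f = \<lparr>carrier = sdp_carrier n TT SS, monoid.mult = sdp_mult n f, one = (\<lambda>_. 0, \<lambda>_. 0)\<rparr>"

definition alpha_trivial :: "nat \<Rightarrow> (nat \<Rightarrow> 't::ab_group_add set) \<Rightarrow> (nat \<Rightarrow> 's::ab_group_add set)
   \<Rightarrow> (nat \<Rightarrow> nat \<Rightarrow> 's \<Rightarrow> 't \<Rightarrow> 't) \<Rightarrow> bool" where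
  "alpha_trivial n TT SS f \<longleftrightarrow> (\<forall>s\<in>prodT n SS. \<forall>t\<in>prodT n TT. alpha n f s t = t)"

definition component :: "nat \<Rightarrow> (nat \<Rightarrow> 't::ab_group_add set) \<Rightarrow> (nat \<Rightarrow> 's::ab_group_add set)
   \<Rightarrow> nat \<Rightarrow> ((nat \<Rightarrow> 't) \<times> (nat \<Rightarrow> 's)) set" where
  "component n TT SS z = {x \<in> sdp_carrier n TT SS. \<forall>z'<n. z' \<noteq> z \<longrightarrow> fst x z' = 0 \<and> snd x z' = 0}"

text \<open>Left ideal of a left brace with additive group AG and multiplicative group MG (same carrier):
  additive subgroup L with lambda_b(L) in L, where lambda_b(a) = b a - b.\<close>
definition left_ideal :: "('a, 'c) monoid_scheme \<Rightarrow> ('a, 'd) monoid_scheme \<Rightarrow> 'a set \<Rightarrow> bool" where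
  "left_ideal AG MG L \<longleftrightarrow> subgroup L AG \<and>
     (\<forall>b\<in>carrier MG. \<forall>a\<in>L. (b \<otimes>\<^bsub>MG\<^esub> a) \<otimes>\<^bsub>AG\<^esub> inv\<^bsub>AG\<^esub> b \<in> L)"

definition metabelian :: "('a, 'c) monoid_scheme \<Rightarrow> bool" where
  "metabelian G \<longleftrightarrow> group G \<and> comm_group (G\<lparr>carrier := derived G (carrier G)\<rparr>)"

definition sylow_subgroup :: "('a, 'c) monoid_scheme \<Rightarrow> nat \<Rightarrow> 'a set \<Rightarrow> bool" where
  "sylow_subgroup G p P \<longleftrightarrow> Factorial_Ring.prime p \<and> subgroup P G \<and>
     (\<exists>k. card P = p ^ k \<and> p ^ k dvd order G \<and> \<not> p ^ Suc k dvd order G)"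

end

theory Submission
  imports Defs
begin

locale sett =
  fixes n :: nat and TT :: "nat \<Rightarrow> 't::ab_group_add set" and SS :: "nat \<Rightarrow> 's::ab_group_add set"
    and b :: "nat \<Rightarrow> 't \<Rightarrow> 't \<Rightarrow> 's" and f :: "nat \<Rightarrow> nat \<Rightarrow> 's \<Rightarrow> 't \<Rightarrow> 't"
  assumes S: "setting n TT SS b f"
begin

lemma n1: "n > 1" using S unfolding setting_def by auto

lemma T0[simp]: "z < n \<Longrightarrow> 0 \<in> TT z"
  and Tadd[simp]: "z < n \<Longrightarrow> x \<in> TT z \<Longrightarrow> y \<in> TT z \<Longrightarrow> x + y \<in> TT z"
  and Tneg[simp]: "z < n \<Longrightarrow> x \<in> TT z \<Longrightarrow> - x \<in> TT z"
  and S0[simp]: "z < n \<Longrightarrow> 0 \<in> SS z"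
  and Sadd[simp]: "z < n \<Longrightarrow> u \<in> SS z \<Longrightarrow> v \<in> SS z \<Longrightarrow> u + v \<in> SS z"
  and Sneg[simp]: "z < n \<Longrightarrow> u \<in> SS z \<Longrightarrow> - u \<in> SS z"
  using S unfolding setting_def ab_subgroup_def by auto

lemma Tdiff[simp]: "z < n \<Longrightarrow> x \<in> TT z \<Longrightarrow> y \<in> TT z \<Longrightarrow> x - y \<in> TT z"
  by (metis Tadd Tneg diff_conv_add_uminus)
lemma Sdiff[simp]: "z < n \<Longrightarrow> x \<in> SS z \<Longrightarrow> y \<in> SS z \<Longrightarrow> x - y \<in> SS z"
  by (metis Sadd Sneg diff_conv_add_uminus)

lemma b_mem[simp]: "z < n \<Longrightarrow> x \<in> TT z \<Longrightarrow> y \<in> TT z \<Longrightarrow> b z x y \<in> SS z"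
  and b_sym: "z < n \<Longrightarrow> x \<in> TT z \<Longrightarrow> y \<in> TT z \<Longrightarrow> b z x y = b z y x"
  and b_addL: "z < n \<Longrightarrow> x \<in> TT z \<Longrightarrow> x' \<in> TT z \<Longrightarrow> y \<in> TT z \<Longrightarrow> b z (x + x') y = b z x y + b z x' y"
  using S unfolding setting_def sym_biadditive_def by auto

lemma b_addR: "z < n \<Longrightarrow> x \<in> TT z \<Longrightarrow> y \<in> TT z \<Longrightarrow> y' \<in> TT z \<Longrightarrow> b z x (y + y') = b z x y + b z x y'"
proof -
  assume a: "z < n" "x \<in> TT z" "y \<in> TT z" "y' \<in> TT z"
  have "b z x (y + y') = b z (y + y') x" using a by (intro b_sym) auto
  also have "\<dots> = b z y x + b z y' x" using a by (intro b_addL) auto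
  finally show ?thesis using a by (simp add: b_sym)
qed

lemma b_0L[simp]: "z < n \<Longrightarrow> y \<in> TT z \<Longrightarrow> b z 0 y = 0"
  using b_addL[of z 0 0 y] by simp
lemma b_0R[simp]: "z < n \<Longrightarrow> y \<in> TT z \<Longrightarrow> b z y 0 = 0"
  using b_addR[of z y 0 0] by simp
lemma b_negR: "z < n \<Longrightarrow> x \<in> TT z \<Longrightarrow> y \<in> TT z \<Longrightarrow> b z x (- y) = - b z x y"
  using b_addR[of z x y "-y"] by (simp add: neg_eq_iff_add_eq_0[symmetric])

lemma f_orth: "z < n \<Longrightarrow> z' < n \<Longrightarrow> s \<in> SS z \<Longrightarrow> f z z' s \<in> orth_group (TT z') (b z')"
  using S unfolding setting_def by auto
lemma f_bij: "z < n \<Longrightarrow> z' < n \<Longrightarrow> s \<in> SS z \<Longrightarrow> bij_betw (f z z' s) (TT z') (TT z')"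
  using f_orth unfolding orth_group_def by auto
lemma f_in[simp]: "z < n \<Longrightarrow> z' < n \<Longrightarrow> s \<in> SS z \<Longrightarrow> x \<in> TT z' \<Longrightarrow> f z z' s x \<in> TT z'"
  using f_bij bij_betwE by blast
lemma f_add: "z < n \<Longrightarrow> z' < n \<Longrightarrow> s \<in> SS z \<Longrightarrow> x \<in> TT z' \<Longrightarrow> y \<in> TT z' \<Longrightarrow> f z z' s (x + y) = f z z' s x + f z z' s y"
  using f_orth unfolding orth_group_def by auto
lemma f_hom: "z < n \<Longrightarrow> z' < n \<Longrightarrow> s1 \<in> SS z \<Longrightarrow> s2 \<in> SS z \<Longrightarrow> x \<in> TT z' \<Longrightarrow> f z z' (s1 + s2) x = f z z' s1 (f z z' s2 x)"
  using S unfolding setting_def by auto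
lemma f_comm: "z1 < n \<Longrightarrow> z2 < n \<Longrightarrow> z < n \<Longrightarrow> s1 \<in> SS z1 \<Longrightarrow> s2 \<in> SS z2 \<Longrightarrow> x \<in> TT z \<Longrightarrow> f z1 z s1 (f z2 z s2 x) = f z2 z s2 (f z1 z s1 x)"
  using S unfolding setting_def by auto
lemma f_diag[simp]: "z < n \<Longrightarrow> s \<in> SS z \<Longrightarrow> x \<in> TT z \<Longrightarrow> f z z s x = x"
  using S unfolding setting_def by auto

lemma f_pt0[simp]: "z < n \<Longrightarrow> z' < n \<Longrightarrow> s \<in> SS z \<Longrightarrow> f z z' s 0 = 0"
  using f_add[of z z' s 0 0] by simp

lemma f_s0[simp]: assumes "z < n" "z' < n" "x \<in> TT z'" shows "f z z' 0 x = x"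
proof -
  have inj: "inj_on (f z z' 0) (TT z')" using f_bij[OF assms(1,2)] assms by (simp add: bij_betw_def)
  have "f z z' 0 (f z z' 0 x) = f z z' 0 x" using f_hom[of z z' 0 0 x] assms by simp
  then show ?thesis using inj assms by (auto dest: inj_onD)
qed

definition FL :: "nat \<Rightarrow> nat list \<Rightarrow> (nat \<Rightarrow> 's) \<Rightarrow> 't \<Rightarrow> 't" where
  "FL z L s = foldr (\<lambda>z' g. f z' z (s z') \<circ> g) L id"

definition sok :: "nat list \<Rightarrow> (nat \<Rightarrow> 's) \<Rightarrow> bool" where
  "sok L s \<longleftrightarrow> (\<forall>z'\<in>set L. z' < n \<and> s z' \<in> SS z')"

lemma FL_Nil[simp]: "FL z [] s = id" by (simp add: FL_def)
lemma FL_Cons[simp]: "FL z (a # L) s = f a z (s a) \<circ> FL z L s" by (simp add: FL_def)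
lemma sok_Cons[simp]: "sok (a # L) s \<longleftrightarrow> a < n \<and> s a \<in> SS a \<and> sok L s"
  by (auto simp: sok_def)

lemma FL_in[simp]: "z < n \<Longrightarrow> sok L s \<Longrightarrow> x \<in> TT z \<Longrightarrow> FL z L s x \<in> TT z"
  by (induction L) auto

lemma FL_add: "z < n \<Longrightarrow> sok L s \<Longrightarrow> x \<in> TT z \<Longrightarrow> y \<in> TT z \<Longrightarrow> FL z L s (x + y) = FL z L s x + FL z L s y"
  by (induction L) (auto simp: f_add)

lemma FL_pt0[simp]: "z < n \<Longrightarrow> sok L s \<Longrightarrow> FL z L s 0 = 0"
  by (induction L) auto

lemma FL_triv: "z < n \<Longrightarrow> sok L s \<Longrightarrow> (\<forall>z'\<in>set L. z' \<noteq> z \<longrightarrow> s z' = 0) \<Longrightarrow> x \<in> TT z \<Longrightarrow> FL z L s x = x"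
  by (induction L) auto

lemma FL_comm_f: "z < n \<Longrightarrow> sok L s \<Longrightarrow> z1 < n \<Longrightarrow> r \<in> SS z1 \<Longrightarrow> x \<in> TT z \<Longrightarrow>
    f z1 z r (FL z L s x) = FL z L s (f z1 z r x)"
  by (induction L) (auto simp: f_comm)

lemma FL_plus: "z < n \<Longrightarrow> sok L s \<Longrightarrow> sok L s' \<Longrightarrow> x \<in> TT z \<Longrightarrow>
    FL z L (\<lambda>z'. s z' + s' z') x = FL z L s (FL z L s' x)"
proof (induction L arbitrary: x)
  case Nil then show ?case by simp
next
  case (Cons a L)
  have "FL z (a # L) (\<lambda>z'. s z' + s' z') x = f a z (s a + s' a) (FL z L s (FL z L s' x))"
    using Cons by simp
  also have "\<dots> = f a z (s a) (f a z (s' a) (FL z L s (FL z L s' x)))"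
    using Cons by (simp add: f_hom)
  also have "\<dots> = f a z (s a) (FL z L s (f a z (s' a) (FL z L s' x)))"
    using Cons by (simp add: FL_comm_f)
  finally show ?case by simp
qed

lemma sok_upt: "sok [0..<n] s \<longleftrightarrow> (\<forall>z<n. s z \<in> SS z)"
  by (auto simp: sok_def)

lemma alpha_eq: "alpha n f s t = (\<lambda>z. if z < n then FL z [0..<n] s (t z) else 0)"
  unfolding alpha_def FL_def by (rule refl)

lemma prodT_iff: "x \<in> prodT n A \<longleftrightarrow> (\<forall>z<n. x z \<in> A z) \<and> (\<forall>z. n \<le> z \<longrightarrow> x z = 0)"
  by (auto simp: prodT_def)

lemma prodT_sok: "s \<in> prodT n SS \<Longrightarrow> sok [0..<n] s"
  by (simp add: sok_upt prodT_iff)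

lemma alpha_in: "s \<in> prodT n SS \<Longrightarrow> t \<in> prodT n TT \<Longrightarrow> alpha n f s t \<in> prodT n TT"
  by (auto simp: alpha_eq prodT_iff prodT_sok)

lemma alpha_add: "s \<in> prodT n SS \<Longrightarrow> t \<in> prodT n TT \<Longrightarrow> t' \<in> prodT n TT \<Longrightarrow>
   alpha n f s (\<lambda>z. t z + t' z) = (\<lambda>z. alpha n f s t z + alpha n f s t' z)"
  by (auto simp: alpha_eq prodT_iff prodT_sok FL_add)

lemma alpha_plus: "s \<in> prodT n SS \<Longrightarrow> s' \<in> prodT n SS \<Longrightarrow> t \<in> prodT n TT \<Longrightarrow>
   alpha n f (\<lambda>z. s z + s' z) t = alpha n f s (alpha n f s' t)"
  by (auto simp: alpha_eq prodT_iff prodT_sok FL_plus)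

lemma alpha_zero: "t \<in> prodT n TT \<Longrightarrow> alpha n f (\<lambda>_. 0) t = t"
  by (auto simp: alpha_eq prodT_iff sok_def FL_triv)

lemma alpha_pt0: "s \<in> prodT n SS \<Longrightarrow> alpha n f s (\<lambda>_. 0) = (\<lambda>_. 0)"
  by (auto simp: alpha_eq prodT_iff prodT_sok)

lemma zero_prodT_T[simp]: "(\<lambda>_. 0) \<in> prodT n TT" by (simp add: prodT_iff)
lemma zero_prodT_S[simp]: "(\<lambda>_. 0) \<in> prodT n SS" by (simp add: prodT_iff)
lemma add_prodT_T[simp]: "t \<in> prodT n TT \<Longrightarrow> t' \<in> prodT n TT \<Longrightarrow> (\<lambda>z. t z + t' z) \<in> prodT n TT"
  by (simp add: prodT_iff)
lemma add_prodT_S[simp]: "t \<in> prodT n SS \<Longrightarrow> t' \<in> prodT n SS \<Longrightarrow> (\<lambda>z. t z + t' z) \<in> prodT n SS"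
  by (simp add: prodT_iff)
lemma neg_prodT_T[simp]: "t \<in> prodT n TT \<Longrightarrow> (\<lambda>z. - t z) \<in> prodT n TT"
  by (simp add: prodT_iff)
lemma neg_prodT_S[simp]: "t \<in> prodT n SS \<Longrightarrow> (\<lambda>z. - t z) \<in> prodT n SS"
  by (simp add: prodT_iff)

abbreviation "MG \<equiv> sdp_multG n TT SS f"
abbreviation "AG \<equiv> sdp_addG n TT SS b"
abbreviation "C \<equiv> sdp_carrier n TT SS"

lemma carrier_MG[simp]: "carrier MG = C" by (simp add: sdp_multG_def)
lemma carrier_AG[simp]: "carrier AG = C" by (simp add: sdp_addG_def)
lemma mult_MG[simp]: "x \<otimes>\<^bsub>MG\<^esub> y = sdp_mult n f x y" by (simp add: sdp_multG_def)
lemma mult_AG[simp]: "x \<otimes>\<^bsub>AG\<^esub> y = sdp_add n b x y" by (simp add: sdp_addG_def)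
lemma one_MG[simp]: "\<one>\<^bsub>MG\<^esub> = (\<lambda>_. 0, \<lambda>_. 0)" by (simp add: sdp_multG_def)
lemma one_AG[simp]: "\<one>\<^bsub>AG\<^esub> = (\<lambda>_. 0, \<lambda>_. 0)" by (simp add: sdp_addG_def)

lemma C_iff: "x \<in> C \<longleftrightarrow> fst x \<in> prodT n TT \<and> snd x \<in> prodT n SS"
  by (cases x) (simp add: sdp_carrier_def)

lemma mult_closed: "x \<in> C \<Longrightarrow> y \<in> C \<Longrightarrow> sdp_mult n f x y \<in> C"
  by (simp add: C_iff sdp_mult_def alpha_in)

lemma group_MG: "group MG"
proof (rule groupI)
  fix x y assume "x \<in> carrier MG" "y \<in> carrier MG"
  then show "x \<otimes>\<^bsub>MG\<^esub> y \<in> carrier MG" by (simp add: mult_closed)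
next
  show "\<one>\<^bsub>MG\<^esub> \<in> carrier MG" by (simp add: C_iff)
next
  fix x y z assume a: "x \<in> carrier MG" "y \<in> carrier MG" "z \<in> carrier MG"
  then show "x \<otimes>\<^bsub>MG\<^esub> y \<otimes>\<^bsub>MG\<^esub> z = x \<otimes>\<^bsub>MG\<^esub> (y \<otimes>\<^bsub>MG\<^esub> z)"
    by (simp add: C_iff sdp_mult_def alpha_add alpha_in alpha_plus add.assoc)
next
  fix x assume "x \<in> carrier MG"
  then show "\<one>\<^bsub>MG\<^esub> \<otimes>\<^bsub>MG\<^esub> x = x" by (simp add: C_iff sdp_mult_def alpha_zero)
next
  fix x assume a: "x \<in> carrier MG"
  define y where "y = ((\<lambda>z. - alpha n f (\<lambda>z. - snd x z) (fst x) z), (\<lambda>z. - snd x z))"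
  have "y \<in> carrier MG" using a by (simp add: y_def C_iff alpha_in)
  moreover have "y \<otimes>\<^bsub>MG\<^esub> x = \<one>\<^bsub>MG\<^esub>" using a by (simp add: y_def C_iff sdp_mult_def)
  ultimately show "\<exists>y\<in>carrier MG. y \<otimes>\<^bsub>MG\<^esub> x = \<one>\<^bsub>MG\<^esub>" by blast
qed

lemma b_negL: "z < n \<Longrightarrow> x \<in> TT z \<Longrightarrow> y \<in> TT z \<Longrightarrow> b z (- x) y = - b z x y"
  using b_negR[of z y x] b_sym[of z y x] b_sym[of z "-x" y] by simp

lemma add_closed: "x \<in> C \<Longrightarrow> y \<in> C \<Longrightarrow> sdp_add n b x y \<in> C"
  by (simp add: C_iff sdp_add_def prodT_iff)

lemma comm_group_AG: "comm_group AG"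
proof (rule comm_groupI)
  fix x y assume "x \<in> carrier AG" "y \<in> carrier AG"
  then show "x \<otimes>\<^bsub>AG\<^esub> y \<in> carrier AG" by (simp add: add_closed)
next
  show "\<one>\<^bsub>AG\<^esub> \<in> carrier AG" by (simp add: C_iff)
next
  fix x y z assume a: "x \<in> carrier AG" "y \<in> carrier AG" "z \<in> carrier AG"
  have "snd (sdp_add n b (sdp_add n b x y) z) w = snd (sdp_add n b x (sdp_add n b y z)) w" for w
  proof (cases "w < n")
    case True
    have m: "fst x w \<in> TT w" "fst y w \<in> TT w" "fst z w \<in> TT w" using a True by (auto simp: C_iff prodT_iff)
    show ?thesis using True m by (simp add: sdp_add_def b_addL b_addR algebra_simps)
  qed (simp add: sdp_add_def)
  then show "x \<otimes>\<^bsub>AG\<^esub> y \<otimes>\<^bsub>AG\<^esub> z = x \<otimes>\<^bsub>AG\<^esub> (y \<otimes>\<^bsub>AG\<^esub> z)"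
    by (simp add: prod_eq_iff fun_eq_iff) (simp add: sdp_add_def add.assoc)
next
  fix x y assume a: "x \<in> carrier AG" "y \<in> carrier AG"
  have "snd (sdp_add n b x y) w = snd (sdp_add n b y x) w" for w
  proof (cases "w < n")
    case True
    have m: "fst x w \<in> TT w" "fst y w \<in> TT w" using a True by (auto simp: C_iff prodT_iff)
    show ?thesis using True m by (simp add: sdp_add_def b_sym[of w "fst x w"] algebra_simps)
  qed (simp add: sdp_add_def)
  then show "x \<otimes>\<^bsub>AG\<^esub> y = y \<otimes>\<^bsub>AG\<^esub> x"
    by (simp add: prod_eq_iff fun_eq_iff) (simp add: sdp_add_def add.commute)
next
  fix x assume a: "x \<in> carrier AG"
  then show "\<one>\<^bsub>AG\<^esub> \<otimes>\<^bsub>AG\<^esub> x = x"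
    by (auto simp: C_iff sdp_add_def prodT_iff prod_eq_iff fun_eq_iff)
next
  fix x assume a: "x \<in> carrier AG"
  define y where "y = ((\<lambda>z. - fst x z), (\<lambda>z. if z < n then - snd x z + b z (fst x z) (fst x z) else 0))"
  have "y \<in> carrier AG" using a by (auto simp: y_def C_iff prodT_iff)
  moreover have "y \<otimes>\<^bsub>AG\<^esub> x = \<one>\<^bsub>AG\<^esub>" using a
    by (auto simp: y_def C_iff sdp_add_def prodT_iff prod_eq_iff fun_eq_iff b_negL)
  ultimately show "\<exists>y\<in>carrier AG. y \<otimes>\<^bsub>AG\<^esub> x = \<one>\<^bsub>AG\<^esub>" by blast
qed

lemma inv_AG: assumes "x \<in> C"
  shows "inv\<^bsub>AG\<^esub> x = ((\<lambda>z. - fst x z), (\<lambda>z. if z < n then - snd x z + b z (fst x z) (fst x z) else 0))"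
proof -
  interpret comm_group AG by (rule comm_group_AG)
  show ?thesis
    by (rule inv_equality) (use assms in \<open>auto simp: C_iff sdp_add_def prodT_iff prod_eq_iff fun_eq_iff b_negL\<close>)
qed

lemma inv_MG: assumes "x \<in> C"
  shows "inv\<^bsub>MG\<^esub> x = ((\<lambda>z. - alpha n f (\<lambda>z. - snd x z) (fst x) z), (\<lambda>z. - snd x z))"
proof -
  interpret group MG by (rule group_MG)
  show ?thesis
    by (rule inv_equality) (use assms in \<open>auto simp: C_iff sdp_mult_def alpha_in\<close>)
qed

abbreviation "Az \<equiv> component n TT SS"

lemma Az_iff: "x \<in> Az z \<longleftrightarrow> x \<in> C \<and> (\<forall>z'<n. z' \<noteq> z \<longrightarrow> fst x z' = 0 \<and> snd x z' = 0)"
  by (simp add: component_def)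

lemma alpha_fix: assumes "s \<in> prodT n SS" "t \<in> prodT n TT" "\<forall>w<n. w \<noteq> z \<longrightarrow> s w = 0 \<and> t w = 0"
  shows "alpha n f s t = t"
proof -
  have "alpha n f s t w = t w" for w
  proof (cases "w < n")
    case True
    show ?thesis
    proof (cases "w = z")
      case True
      then show ?thesis using assms \<open>w < n\<close>
        by (auto simp: alpha_eq prodT_sok prodT_iff intro!: FL_triv)
    next
      case False
      then show ?thesis using assms \<open>w < n\<close> by (auto simp: alpha_eq prodT_sok)
    qed
  qed (use assms in \<open>auto simp: alpha_eq prodT_iff\<close>)
  then show ?thesis by auto
qed

lemma alpha_zero_at: assumes "s \<in> prodT n SS" "t \<in> prodT n TT" "t w = 0"
  shows "alpha n f s t w = 0"
  using assms by (auto simp: alpha_eq prodT_sok)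

lemma Az_sub_MG: assumes "z < n" shows "subgroup (Az z) MG"
proof -
  interpret group MG by (rule group_MG)
  show ?thesis
  proof (rule subgroupI)
    show "Az z \<subseteq> carrier MG" by (auto simp: Az_iff)
    have "\<one>\<^bsub>MG\<^esub> \<in> Az z" by (simp add: Az_iff C_iff)
    then show "Az z \<noteq> {}" by blast
  next
    fix a assume a: "a \<in> Az z"
    then have c: "a \<in> C" by (simp add: Az_iff)
    then have "inv\<^bsub>MG\<^esub> a \<in> C" using inv_closed by simp
    then show "inv\<^bsub>MG\<^esub> a \<in> Az z" using a c
      by (auto simp: Az_iff inv_MG C_iff alpha_zero_at)
  next
    fix a c assume a: "a \<in> Az z" "c \<in> Az z"
    then show "a \<otimes>\<^bsub>MG\<^esub> c \<in> Az z"
      by (auto simp: Az_iff mult_closed sdp_mult_def C_iff alpha_zero_at alpha_in)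
  qed
qed

lemma Az_comm: assumes "z < n" shows "comm_group (MG\<lparr>carrier := Az z\<rparr>)"
proof -
  interpret group MG by (rule group_MG)
  interpret H: group "MG\<lparr>carrier := Az z\<rparr>" by (rule subgroup_imp_group[OF Az_sub_MG[OF assms]])
  show ?thesis
  proof (rule H.group_comm_groupI)
    fix x y assume "x \<in> carrier (MG\<lparr>carrier := Az z\<rparr>)" "y \<in> carrier (MG\<lparr>carrier := Az z\<rparr>)"
    then have a: "x \<in> Az z" "y \<in> Az z" by auto
    have ex: "alpha n f (snd x) (fst y) = fst y" "alpha n f (snd y) (fst x) = fst x"
      using a by (auto simp: Az_iff C_iff intro!: alpha_fix[where z=z])
    show "x \<otimes>\<^bsub>MG\<lparr>carrier := Az z\<rparr>\<^esub> y = y \<otimes>\<^bsub>MG\<lparr>carrier := Az z\<rparr>\<^esub> x"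
      by (simp add: sdp_multG_def sdp_mult_def ex add.commute)
  qed
qed

lemma Az_ideal: assumes "z < n" shows "left_ideal AG MG (Az z)"
proof -
  interpret A: comm_group AG by (rule comm_group_AG)
  interpret M: group MG by (rule group_MG)
  have sub: "subgroup (Az z) AG"
  proof (rule A.subgroupI)
    show "Az z \<subseteq> carrier AG" by (auto simp: Az_iff)
    have "\<one>\<^bsub>AG\<^esub> \<in> Az z" by (simp add: Az_iff C_iff)
    then show "Az z \<noteq> {}" by blast
  next
    fix a assume a: "a \<in> Az z"
    then have c: "a \<in> C" by (simp add: Az_iff)
    then have "inv\<^bsub>AG\<^esub> a \<in> C" using A.inv_closed by simp
    then show "inv\<^bsub>AG\<^esub> a \<in> Az z" using a c
      by (auto simp: Az_iff inv_AG C_iff prodT_iff)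
  next
    fix a c assume a: "a \<in> Az z" "c \<in> Az z"
    then show "a \<otimes>\<^bsub>AG\<^esub> c \<in> Az z"
      by (auto simp: Az_iff add_closed sdp_add_def C_iff prodT_iff)
  qed
  have "(p \<otimes>\<^bsub>MG\<^esub> a) \<otimes>\<^bsub>AG\<^esub> inv\<^bsub>AG\<^esub> p \<in> Az z" if p: "p \<in> C" and a: "a \<in> Az z" for p a
  proof -
    have ac: "a \<in> C" using a by (simp add: Az_iff)
    have inC: "(p \<otimes>\<^bsub>MG\<^esub> a) \<otimes>\<^bsub>AG\<^esub> inv\<^bsub>AG\<^esub> p \<in> C"
      using p ac by (metis A.inv_closed A.m_closed M.m_closed carrier_AG carrier_MG)
    have "fst ((p \<otimes>\<^bsub>MG\<^esub> a) \<otimes>\<^bsub>AG\<^esub> inv\<^bsub>AG\<^esub> p) w = 0 \<and> snd ((p \<otimes>\<^bsub>MG\<^esub> a) \<otimes>\<^bsub>AG\<^esub> inv\<^bsub>AG\<^esub> p) w = 0"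
      if w: "w < n" "w \<noteq> z" for w
    proof -
      have z: "fst a w = 0" "snd a w = 0" using a w by (auto simp: Az_iff)
      have al: "alpha n f (snd p) (fst a) w = 0" using p ac z by (auto simp: C_iff intro: alpha_zero_at)
      have tp: "fst p w \<in> TT w" using p w by (auto simp: C_iff prodT_iff)
      show ?thesis using w z al tp p
        by (simp add: inv_AG sdp_add_def sdp_mult_def b_negR)
    qed
    then show ?thesis using inC by (simp add: Az_iff)
  qed
  then show ?thesis using sub unfolding left_ideal_def by auto
qed

lemma finprod_formula:
  assumes a: "a \<in> (\<Pi>\<^sub>E z\<in>{..<n}. Az z)"
  shows "m \<le> n \<Longrightarrow> finprod AG a {..<m} =
     (\<lambda>w. if w < m then fst (a w) w else 0, \<lambda>w. if w < m then snd (a w) w else 0)"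
proof (induction m)
  case 0
  interpret A: comm_group AG by (rule comm_group_AG)
  show ?case by simp
next
  case (Suc m)
  interpret A: comm_group AG by (rule comm_group_AG)
  have aA: "a z \<in> Az z" if "z < n" for z using a that by (simp add: PiE_iff)
  have aC: "a z \<in> C" if "z < n" for z using aA[OF that] by (simp add: Az_iff)
  have az: "fst (a z) w = 0 \<and> snd (a z) w = 0" if "z < n" "w \<noteq> z" for z w
  proof (cases "w < n")
    case True then show ?thesis using aA[OF that(1)] that unfolding Az_iff by blast
  next
    case False then show ?thesis using aC[OF that(1)] by (simp add: C_iff prodT_iff)
  qed
  have "finprod AG a {..<Suc m} = a m \<otimes>\<^bsub>AG\<^esub> finprod AG a {..<m}"
    unfolding lessThan_Suc using Suc.prems aC by (intro A.finprod_insert) auto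
  also have "\<dots> = (\<lambda>w. if w < Suc m then fst (a w) w else 0, \<lambda>w. if w < Suc m then snd (a w) w else 0)"
  proof -
    have "snd (a m \<otimes>\<^bsub>AG\<^esub> finprod AG a {..<m}) w = (if w < Suc m then snd (a w) w else 0)" for w
    proof -
      consider "w < m" | "w = m" | "m < w" by linarith
      then show ?thesis
      proof cases
        case 1
        then have "fst (a w) w \<in> TT w" using Suc.prems aC[of w] by (auto simp: C_iff prodT_iff)
        then show ?thesis using 1 Suc az[of m w] by (simp add: sdp_add_def)
      next
        case 2
        then have "fst (a w) w \<in> TT w" using Suc.prems aC[of w] by (auto simp: C_iff prodT_iff)
        then show ?thesis using 2 Suc by (simp add: sdp_add_def)
      next
        case 3
        then show ?thesis using Suc az[of m w] by (simp add: sdp_add_def)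
      qed
    qed
    moreover have "fst (a m \<otimes>\<^bsub>AG\<^esub> finprod AG a {..<m}) w = (if w < Suc m then fst (a w) w else 0)" for w
      using Suc az[of m w] by (auto simp: sdp_add_def less_Suc_eq)
    ultimately show ?thesis by (simp add: prod_eq_iff fun_eq_iff)
  qed
  finally show ?case .
qed

lemma direct_sum: "\<forall>x\<in>carrier AG. \<exists>!a. a \<in> (\<Pi>\<^sub>E z\<in>{..<n}. Az z) \<and> x = finprod AG a {..<n}"
proof
  fix x assume x: "x \<in> carrier AG"
  then have xC: "fst x \<in> prodT n TT" "snd x \<in> prodT n SS" by (auto simp: C_iff)
  define a0 where "a0 = (\<lambda>z\<in>{..<n}. ((\<lambda>w. if w = z then fst x z else 0), (\<lambda>w. if w = z then snd x z else 0)))"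
  have a0: "a0 \<in> (\<Pi>\<^sub>E z\<in>{..<n}. Az z)"
    using xC by (auto simp: a0_def Az_iff C_iff prodT_iff)
  have "finprod AG a0 {..<n} = x"
    using finprod_formula[OF a0 order_refl] xC
    by (auto simp: a0_def prod_eq_iff fun_eq_iff prodT_iff)
  show "\<exists>!a. a \<in> (\<Pi>\<^sub>E z\<in>{..<n}. Az z) \<and> x = finprod AG a {..<n}"
  proof (rule ex1I)
    show "a0 \<in> (\<Pi>\<^sub>E z\<in>{..<n}. Az z) \<and> x = finprod AG a0 {..<n}"
      using a0 \<open>finprod AG a0 {..<n} = x\<close> by simp
  next
    fix a assume a: "a \<in> (\<Pi>\<^sub>E z\<in>{..<n}. Az z) \<and> x = finprod AG a {..<n}"
    have e1: "fst (a w) w = fst x w \<and> snd (a w) w = snd x w" if "w < n" for w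
      using a finprod_formula[of a n] that by (auto simp: prod_eq_iff fun_eq_iff)
    show "a = a0"
    proof (rule PiE_ext[OF conjunct1[OF a] a0])
      fix z assume z: "z \<in> {..<n}"
      have "a z \<in> Az z" using a z by auto
      then have "fst (a z) w = fst (a0 z) w \<and> snd (a z) w = snd (a0 z) w" for w
        using z e1[of z] by (cases "w < n") (auto simp: a0_def Az_iff C_iff prodT_iff)
      then show "a z = a0 z" by (simp add: prod_eq_iff fun_eq_iff)
    qed
  qed
qed

lemma noncomm: assumes "\<not> alpha_trivial n TT SS f"
  shows "\<not> (\<forall>x\<in>carrier MG. \<forall>y\<in>carrier MG. x \<otimes>\<^bsub>MG\<^esub> y = y \<otimes>\<^bsub>MG\<^esub> x)"
proof
  assume c: "\<forall>x\<in>carrier MG. \<forall>y\<in>carrier MG. x \<otimes>\<^bsub>MG\<^esub> y = y \<otimes>\<^bsub>MG\<^esub> x"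
  obtain s t where st: "s \<in> prodT n SS" "t \<in> prodT n TT" "alpha n f s t \<noteq> t"
    using assms unfolding alpha_trivial_def by blast
  have "((\<lambda>_. 0), s) \<otimes>\<^bsub>MG\<^esub> (t, (\<lambda>_. 0)) = (t, (\<lambda>_. 0)) \<otimes>\<^bsub>MG\<^esub> ((\<lambda>_. 0), s)"
    using c st by (simp add: C_iff)
  then have "alpha n f s t = t" by (simp add: sdp_mult_def alpha_pt0 fun_eq_iff)
  with st show False by simp
qed

definition "K0 = {x \<in> C. snd x = (\<lambda>_. 0)}"

lemma K0_sub: "subgroup K0 MG"
proof -
  interpret group MG by (rule group_MG)
  show ?thesis
  proof (rule subgroupI)
    show "K0 \<subseteq> carrier MG" by (auto simp: K0_def)
    have "\<one>\<^bsub>MG\<^esub> \<in> K0" by (simp add: K0_def C_iff)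
    then show "K0 \<noteq> {}" by blast
  next
    fix a assume a: "a \<in> K0"
    then have c: "a \<in> C" by (simp add: K0_def)
    then have "inv\<^bsub>MG\<^esub> a \<in> C" using inv_closed by simp
    then show "inv\<^bsub>MG\<^esub> a \<in> K0" using a c by (simp add: K0_def inv_MG)
  next
    fix a c assume a: "a \<in> K0" "c \<in> K0"
    have "sdp_mult n f a c \<in> C" using a by (intro mult_closed) (auto simp: K0_def)
    moreover have "snd (sdp_mult n f a c) = (\<lambda>_. 0)" using a by (simp add: K0_def sdp_mult_def)
    ultimately show "a \<otimes>\<^bsub>MG\<^esub> c \<in> K0" by (simp add: K0_def)
  qed
qed

lemma metab: "metabelian MG"
proof -
  interpret group MG by (rule group_MG)
  have ds: "derived_set MG (carrier MG) \<subseteq> K0"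
  proof
    fix x assume "x \<in> derived_set MG (carrier MG)"
    then obtain h1 h2 where h: "h1 \<in> C" "h2 \<in> C"
      and x: "x = h1 \<otimes>\<^bsub>MG\<^esub> h2 \<otimes>\<^bsub>MG\<^esub> inv\<^bsub>MG\<^esub> h1 \<otimes>\<^bsub>MG\<^esub> inv\<^bsub>MG\<^esub> h2" by auto
    have "x \<in> C" using h x by (metis carrier_MG m_closed inv_closed)
    moreover have "snd x = (\<lambda>_. 0)" using h by (simp add: x inv_MG sdp_mult_def)
    ultimately show "x \<in> K0" by (simp add: K0_def)
  qed
  have dK: "derived MG (carrier MG) \<subseteq> K0"
    unfolding derived_def by (rule generate_subgroup_incl[OF ds K0_sub])
  interpret H: group "MG\<lparr>carrier := derived MG (carrier MG)\<rparr>"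
    by (rule subgroup_imp_group[OF derived_is_subgroup]) simp
  have "comm_group (MG\<lparr>carrier := derived MG (carrier MG)\<rparr>)"
  proof (rule H.group_comm_groupI)
    fix x y assume "x \<in> carrier (MG\<lparr>carrier := derived MG (carrier MG)\<rparr>)" "y \<in> carrier (MG\<lparr>carrier := derived MG (carrier MG)\<rparr>)"
    then have a: "x \<in> K0" "y \<in> K0" using dK by auto
    then have ex: "alpha n f (\<lambda>_. 0) (fst y) = fst y" "alpha n f (\<lambda>_. 0) (fst x) = fst x"
      by (auto simp: K0_def C_iff alpha_zero)
    show "x \<otimes>\<^bsub>MG\<lparr>carrier := derived MG (carrier MG)\<rparr>\<^esub> y = y \<otimes>\<^bsub>MG\<lparr>carrier := derived MG (carrier MG)\<rparr>\<^esub> x"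
      using a by (simp add: sdp_multG_def sdp_mult_def ex add.commute K0_def)
  qed
  then show ?thesis unfolding metabelian_def using group_MG by simp
qed

lemma killA:
  assumes z: "z < n" and fin: "finite (Az z)" and y: "y \<in> Az z"
    and cop: "coprime m (card (Az z))" and pw: "y [^]\<^bsub>MG\<^esub> m = \<one>\<^bsub>MG\<^esub>"
  shows "y = \<one>\<^bsub>MG\<^esub>"
proof -
  interpret M: group MG by (rule group_MG)
  interpret H: group "MG\<lparr>carrier := Az z\<rparr>" by (rule M.subgroup_imp_group[OF Az_sub_MG[OF z]])
  have yH: "y \<in> carrier (MG\<lparr>carrier := Az z\<rparr>)" using y by simp
  have "y [^]\<^bsub>MG\<lparr>carrier := Az z\<rparr>\<^esub> m = \<one>\<^bsub>MG\<lparr>carrier := Az z\<rparr>\<^esub>"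
    using pw M.nat_pow_consistent[of y m "Az z"] by simp
  then have d1: "H.ord y dvd m" using H.pow_eq_id[OF yH] by simp
  have d2: "H.ord y dvd card (Az z)" using H.ord_dvd_group_order[OF yH] by (simp add: order_def)
  have "H.ord y dvd 1" using d1 d2 cop by (metis coprime_common_divisor)
  then have "H.ord y dvd Suc 0" by simp
  then have A1: "y [^]\<^bsub>MG\<lparr>carrier := Az z\<rparr>\<^esub> (Suc 0) = \<one>\<^bsub>MG\<lparr>carrier := Az z\<rparr>\<^esub>"
    using H.pow_eq_id[OF yH, of "Suc 0"] by blast
  moreover have "y [^]\<^bsub>MG\<lparr>carrier := Az z\<rparr>\<^esub> (Suc 0) = y"
    using yH by (simp only: H.nat_pow_Suc H.nat_pow_0 H.l_one)
  ultimately have "y = \<one>\<^bsub>MG\<lparr>carrier := Az z\<rparr>\<^esub>" by metis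
  then show ?thesis by simp
qed

definition piS :: "nat \<Rightarrow> (nat \<Rightarrow> 't) \<times> (nat \<Rightarrow> 's) \<Rightarrow> (nat \<Rightarrow> 't) \<times> (nat \<Rightarrow> 's)" where "piS w x = ((\<lambda>_. 0), (\<lambda>v. if v = w then snd x w else 0))"
definition piT :: "nat \<Rightarrow> (nat \<Rightarrow> 't) \<times> (nat \<Rightarrow> 's) \<Rightarrow> (nat \<Rightarrow> 't) \<times> (nat \<Rightarrow> 's)" where "piT w x = ((\<lambda>v. if v = w then fst x w else 0), (\<lambda>_. 0))"

lemma piS_Az: "w < n \<Longrightarrow> x \<in> C \<Longrightarrow> piS w x \<in> Az w"
  by (auto simp: piS_def Az_iff C_iff prodT_iff)
lemma piT_Az: "w < n \<Longrightarrow> x \<in> C \<Longrightarrow> piT w x \<in> Az w"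
  by (auto simp: piT_def Az_iff C_iff prodT_iff)

lemma piS_pow: assumes "w < n" "x \<in> C"
  shows "piS w x [^]\<^bsub>MG\<^esub> (m::nat) = piS w (x [^]\<^bsub>MG\<^esub> m)"
proof (induction m)
  case 0
  interpret M: group MG by (rule group_MG)
  show ?case by (simp add: piS_def fun_eq_iff)
next
  case (Suc m)
  interpret M: group MG by (rule group_MG)
  have xm: "x [^]\<^bsub>MG\<^esub> m \<in> C" using assms M.nat_pow_closed by simp
  have "piS w x [^]\<^bsub>MG\<^esub> Suc m = sdp_mult n f (piS w (x [^]\<^bsub>MG\<^esub> m)) (piS w x)"
    using Suc by simp
  also have "\<dots> = piS w (sdp_mult n f (x [^]\<^bsub>MG\<^esub> m) x)"
    using xm assms piS_Az[OF assms(1) xm]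
    by (simp add: piS_def sdp_mult_def fun_eq_iff Az_iff C_iff alpha_pt0)
  finally show ?case by simp
qed

lemma piT_pow: assumes "w < n" "x \<in> K0"
  shows "piT w x [^]\<^bsub>MG\<^esub> (m::nat) = piT w (x [^]\<^bsub>MG\<^esub> m) \<and> x [^]\<^bsub>MG\<^esub> m \<in> K0"
proof (induction m)
  case 0
  interpret M: group MG by (rule group_MG)
  show ?case by (simp add: piT_def K0_def C_iff fun_eq_iff)
next
  case (Suc m)
  interpret M: group MG by (rule group_MG)
  have xm: "x [^]\<^bsub>MG\<^esub> m \<in> K0" using Suc by simp
  have xK: "x \<in> K0" by fact
  have K: "x [^]\<^bsub>MG\<^esub> Suc m \<in> K0"
    using subgroup.m_closed[OF K0_sub xm xK] by simp
  have "piT w x [^]\<^bsub>MG\<^esub> Suc m = sdp_mult n f (piT w (x [^]\<^bsub>MG\<^esub> m)) (piT w x)"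
    using Suc by simp
  also have "\<dots> = piT w (sdp_mult n f (x [^]\<^bsub>MG\<^esub> m) x)"
  proof -
    have a1: "piT w x \<in> C" using piT_Az[OF assms(1)] xK by (simp add: K0_def Az_iff)
    have a2: "fst x \<in> prodT n TT" using xK by (simp add: K0_def C_iff)
    have s1: "snd (x [^]\<^bsub>MG\<^esub> m) = (\<lambda>_. 0)" "snd x = (\<lambda>_. 0)" using xm xK by (auto simp: K0_def)
    have e: "alpha n f (snd (x [^]\<^bsub>MG\<^esub> m)) (fst x) = fst x" using s1 alpha_zero[OF a2] by simp
    have e2: "alpha n f (\<lambda>_. 0) (fst (piT w x)) = fst (piT w x)" using a1 unfolding C_iff by (intro alpha_zero) simp
    have sp: "snd (piT w y) = (\<lambda>_. 0)" for y by (simp add: piT_def)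
    have L: "sdp_mult n f (piT w (x [^]\<^bsub>MG\<^esub> m)) (piT w x) =
       (\<lambda>z. fst (piT w (x [^]\<^bsub>MG\<^esub> m)) z + fst (piT w x) z, \<lambda>z. 0 + 0)"
      unfolding sdp_mult_def sp e2 ..
    have R: "sdp_mult n f (x [^]\<^bsub>MG\<^esub> m) x = (\<lambda>z. fst (x [^]\<^bsub>MG\<^esub> m) z + fst x z, \<lambda>z. 0 + 0)"
      unfolding sdp_mult_def s1 alpha_zero[OF a2] ..
    show ?thesis unfolding L R by (simp add: piT_def fun_eq_iff)
  qed
  finally show ?case using K by simp
qed

lemma alpha_at_triv: assumes "s \<in> prodT n SS" "t \<in> prodT n TT" "z0 < n" "\<forall>v<n. v \<noteq> z0 \<longrightarrow> s v = 0"
  shows "alpha n f s t z0 = t z0"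
  using assms by (auto simp: alpha_eq prodT_sok prodT_iff intro!: FL_triv)

lemma sylow_comm:
  assumes fin: "\<forall>z<n. finite (Az z)"
    and cop: "\<forall>z<n. \<forall>z'<n. z \<noteq> z' \<longrightarrow> coprime (card (Az z)) (card (Az z'))"
    and syl: "sylow_subgroup MG p P"
  shows "comm_group (MG\<lparr>carrier := P\<rparr>)"
proof -
  interpret M: group MG by (rule group_MG)
  from syl obtain k where pp: "Factorial_Ring.prime p" and sub: "subgroup P MG" and cP: "card P = p ^ k"
    unfolding sylow_subgroup_def by blast
  interpret HP: group "MG\<lparr>carrier := P\<rparr>" by (rule M.subgroup_imp_group[OF sub])
  have PC: "x \<in> C" if "x \<in> P" for x using subgroup.mem_carrier[OF sub that] by simp
  define z0 where "z0 = (if \<exists>z<n. p dvd card (Az z) then (SOME z. z < n \<and> p dvd card (Az z)) else 0)"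
  have ndvd: "\<not> p dvd card (Az z)" if "z < n" "z \<noteq> z0" for z
  proof
    assume d: "p dvd card (Az z)"
    then have ex: "\<exists>z<n. p dvd card (Az z)" using that by blast
    then have z0: "z0 < n \<and> p dvd card (Az z0)" unfolding z0_def using someI_ex[OF ex] by simp
    then have "coprime (card (Az z)) (card (Az z0))" using cop that by auto
    then have "is_unit p" using d z0 by (meson coprime_common_divisor)
    then show False using pp by simp
  qed
  have copk: "coprime (p ^ k) (card (Az z))" if "z < n" "z \<noteq> z0" for z
    using ndvd[OF that] pp by (simp add: prime_imp_coprime coprime_power_left_iff)
  have pw: "x [^]\<^bsub>MG\<^esub> (p ^ k) = \<one>\<^bsub>MG\<^esub>" if "x \<in> P" for x
  proof -
    have "x [^]\<^bsub>MG\<lparr>carrier := P\<rparr>\<^esub> order (MG\<lparr>carrier := P\<rparr>) = \<one>\<^bsub>MG\<lparr>carrier := P\<rparr>\<^esub>"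
      using HP.pow_order_eq_1[of x] that by simp
    then show ?thesis using M.nat_pow_consistent[of x "p ^ k" P] cP by (simp add: order_def)
  qed
  have aS: "snd x w = 0" if "x \<in> P" "w < n" "w \<noteq> z0" for x w
  proof -
    have "piS w x [^]\<^bsub>MG\<^esub> (p ^ k) = \<one>\<^bsub>MG\<^esub>"
      using piS_pow[OF that(2) PC[OF that(1)]] pw[OF that(1)] by (simp add: piS_def fun_eq_iff)
    then have "piS w x = \<one>\<^bsub>MG\<^esub>"
      using killA[OF that(2) _ piS_Az[OF that(2) PC[OF that(1)]] copk[OF that(2,3)]] fin that(2) by blast
    then show ?thesis by (simp add: piS_def fun_eq_iff split: if_splits)
  qed
  have aT: "fst c w = 0" if "c \<in> P" "c \<in> K0" "w < n" "w \<noteq> z0" for c w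
  proof -
    have "piT w c [^]\<^bsub>MG\<^esub> (p ^ k) = \<one>\<^bsub>MG\<^esub>"
      using piT_pow[OF that(3,2)] pw[OF that(1)] by (simp add: piT_def fun_eq_iff)
    then have "piT w c = \<one>\<^bsub>MG\<^esub>"
      using killA[OF that(3) _ piT_Az[OF that(3) PC[OF that(1)]] copk[OF that(3,4)]] fin that(3) by blast
    then show ?thesis by (simp add: piT_def fun_eq_iff split: if_splits)
  qed
  show ?thesis
  proof (rule HP.group_comm_groupI)
    fix x y assume "x \<in> carrier (MG\<lparr>carrier := P\<rparr>)" "y \<in> carrier (MG\<lparr>carrier := P\<rparr>)"
    then have xy: "x \<in> P" "y \<in> P" by auto
    have xC: "x \<in> C" and yC: "y \<in> C" using PC xy by auto
    define c where "c = inv\<^bsub>MG\<^esub> (y \<otimes>\<^bsub>MG\<^esub> x) \<otimes>\<^bsub>MG\<^esub> (x \<otimes>\<^bsub>MG\<^esub> y)"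
    have cP: "c \<in> P" unfolding c_def using xy
      by (intro subgroup.m_closed[OF sub] subgroup.m_inv_closed[OF sub]) auto
    have cC: "c \<in> C" using PC[OF cP] .
    have eq: "(y \<otimes>\<^bsub>MG\<^esub> x) \<otimes>\<^bsub>MG\<^esub> c = x \<otimes>\<^bsub>MG\<^esub> y"
      unfolding c_def using xC yC
      by (metis M.inv_closed M.m_closed M.r_inv M.l_one M.m_assoc carrier_MG)
    have sc: "snd c = (\<lambda>_. 0)"
    proof
      fix w
      have "snd ((y \<otimes>\<^bsub>MG\<^esub> x) \<otimes>\<^bsub>MG\<^esub> c) w = snd (x \<otimes>\<^bsub>MG\<^esub> y) w" using eq by simp
      then show "snd c w = 0" by (simp add: sdp_mult_def add.commute)
    qed
    have cK: "c \<in> K0" using cC sc by (simp add: K0_def)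
    have fw: "fst (x \<otimes>\<^bsub>MG\<^esub> y) w = fst (y \<otimes>\<^bsub>MG\<^esub> x) w" for w
    proof (cases "w < n")
      case False
      have "x \<otimes>\<^bsub>MG\<^esub> y \<in> C" "y \<otimes>\<^bsub>MG\<^esub> x \<in> C" using xC yC mult_closed by auto
      then show ?thesis using False by (simp add: C_iff prodT_iff)
    next
      case True
      show ?thesis
      proof (cases "w = z0")
        case False
        have yxC: "y \<otimes>\<^bsub>MG\<^esub> x \<in> C" using xC yC mult_closed by auto
        have "fst (x \<otimes>\<^bsub>MG\<^esub> y) w = fst ((y \<otimes>\<^bsub>MG\<^esub> x) \<otimes>\<^bsub>MG\<^esub> c) w" using eq by simp
        also have "\<dots> = fst (y \<otimes>\<^bsub>MG\<^esub> x) w + alpha n f (snd (y \<otimes>\<^bsub>MG\<^esub> x)) (fst c) w"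
          by (simp add: sdp_mult_def)
        also have "alpha n f (snd (y \<otimes>\<^bsub>MG\<^esub> x)) (fst c) w = 0"
          using yxC cC aT[OF cP cK True False] by (intro alpha_zero_at) (auto simp: C_iff)
        finally show ?thesis by simp
      next
        case tz: True
        have sx: "\<forall>v<n. v \<noteq> z0 \<longrightarrow> snd x v = 0" and sy: "\<forall>v<n. v \<noteq> z0 \<longrightarrow> snd y v = 0"
          using aS xy by auto
        have "alpha n f (snd x) (fst y) z0 = fst y z0" "alpha n f (snd y) (fst x) z0 = fst x z0"
          using alpha_at_triv[of "snd x" "fst y" z0] alpha_at_triv[of "snd y" "fst x" z0]
            xC yC sx sy True tz by (auto simp: C_iff)
        then show ?thesis using tz by (simp add: sdp_mult_def add.commute)
      qed
    qed
    have "x \<otimes>\<^bsub>MG\<^esub> y = y \<otimes>\<^bsub>MG\<^esub> x"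
      using fw by (simp add: prod_eq_iff fun_eq_iff) (simp add: sdp_mult_def add.commute)
    then show "x \<otimes>\<^bsub>MG\<lparr>carrier := P\<rparr>\<^esub> y = y \<otimes>\<^bsub>MG\<lparr>carrier := P\<rparr>\<^esub> x"
      by (simp add: sdp_multG_def)
  qed
qed

end
theorem proposition2p3:
  fixes n :: nat
    and TT :: "nat \<Rightarrow> 't::ab_group_add set" and SS :: "nat \<Rightarrow> 's::ab_group_add set"
    and b :: "nat \<Rightarrow> 't \<Rightarrow> 't \<Rightarrow> 's" and f :: "nat \<Rightarrow> nat \<Rightarrow> 's \<Rightarrow> 't \<Rightarrow> 't"
  assumes "setting n TT SS b f"
  defines "AG \<equiv> sdp_addG n TT SS b" and "MG \<equiv> sdp_multG n TT SS f"
    and "A \<equiv> component n TT SS"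
  shows "(\<forall>z<n. left_ideal AG MG (A z) \<and> comm_group (MG\<lparr>carrier := A z\<rparr>))
       \<and> (\<forall>x\<in>carrier AG. \<exists>!a. a \<in> (\<Pi>\<^sub>E z\<in>{..<n}. A z) \<and> x = finprod AG a {..<n})
       \<and> (\<not> alpha_trivial n TT SS f \<longrightarrow>
            metabelian MG \<and> \<not> (\<forall>x\<in>carrier MG. \<forall>y\<in>carrier MG. x \<otimes>\<^bsub>MG\<^esub> y = y \<otimes>\<^bsub>MG\<^esub> x))
       \<and> ((\<forall>z<n. finite (A z)) \<and> (\<forall>z<n. \<forall>z'<n. z \<noteq> z' \<longrightarrow> coprime (card (A z)) (card (A z')))
            \<longrightarrow> (\<forall>p P. sylow_subgroup MG p P \<longrightarrow> comm_group (MG\<lparr>carrier := P\<rparr>)))"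
proof -
  interpret sett n TT SS b f by (rule sett.intro) (rule assms(1))
  show ?thesis unfolding AG_def MG_def A_def
    using Az_ideal Az_comm direct_sum noncomm metab sylow_comm by blast
qed

end
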